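(* Let $G=(V,E)$ be a finite simple connected graph, $b\in\mathbb{R}^V$ nontrivial, $S\subset V$ a $b$-boundable subset with $s=|S|$, $x_S$ the local solution of $\mathcal{L}x=b$ satisfying the boundary condition $b$, and $b_1=D_S^{-1/2}A_{S,\delta S}D_{\delta S}^{-1/2}b_{\delta S}$. Let $0<\gamma<1$, $T=s^3\log(s^3\gamma^{-1})$ and $N=T/\gamma$. Then $$\Big\|x_S-\sum_{j=1}^N \mathcal{H}_{S,jT/N}\,\frac{T}{N}\,b_1\Big\|\le\gamma\big(\|b_1\|+\|x_S\|\big).$$
   Context: $d_v$ is the degree of $v$, $D$ the diagonal degree matrix, $A$ the adjacency matrix, $\mathcal{L}=D^{-1/2}(D-A)D^{-1/2}$. For $S\subseteq V$, $M_S$ is the principal submatrix indexed by $S$; $\delta(S)=\{u\in V\setminus S: u\sim v\text{ for some }v\in S\}$; $A_{S,\delta S}$ is the submatrix of $A$ with rows $S$ and columns $\delta(S)$; $D_{\delta S}$, $b_{\delta S}$ are restrictions to $\delta(S)$. $S$ is $b$-boundable if (i) $S\subseteq V\setminus\mathrm{supp}(b)$, (ii) $\delta(S)\cap\mathrm{supp}(b)\neq\emptyset$, (iii) the induced subgraph on $S$ is connected and $\delta(S)\neq\emptyset$. The solution of $\mathcal{L}x=b$ satisfying the boundary condition $b$ is $x\in\mathbb{R}^V$ with $x(v)=\sum_{u\sim v}x(u)/\sqrt{d_vd_u}$ for $v\in S$ and $x(v)=b(v)$ for $v\notin S$; $x_S$ is its restriction to $S$. $\mathcal{H}_{S,t}=e^{-t\mathcal{L}_S}$.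 $\|\cdot\|$ is the Euclidean norm. *)

theory Defs
  imports "HOL-Analysis.Analysis"
begin

definition simple_graph :: "'a set \<Rightarrow> ('a \<Rightarrow> 'a \<Rightarrow> bool) \<Rightarrow> bool" where
  "simple_graph V E \<longleftrightarrow> finite V \<and> (\<forall>u v. E u v \<longrightarrow> u \<in> V \<and> v \<in> V)
     \<and> (\<forall>u v. E u v \<longrightarrow> E v u) \<and> (\<forall>u. \<not> E u u)"

definition connected_on :: "('a \<Rightarrow> 'a \<Rightarrow> bool) \<Rightarrow> 'a set \<Rightarrow> bool" where
  "connected_on E S \<longleftrightarrow> S \<noteq> {} \<and>
     (\<forall>u\<in>S. \<forall>v\<in>S. (u, v) \<in> {(a, c). a \<in> S \<and> c \<in> S \<and> E a c}\<^sup>*)"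

definition degree :: "'a set \<Rightarrow> ('a \<Rightarrow> 'a \<Rightarrow> bool) \<Rightarrow> 'a \<Rightarrow> real" where
  "degree V E v = real (card {u \<in> V. E v u})"

definition adj :: "('a \<Rightarrow> 'a \<Rightarrow> bool) \<Rightarrow> 'a \<Rightarrow> 'a \<Rightarrow> real" where
  "adj E u v = (if E u v then 1 else 0)"

definition nlap :: "'a set \<Rightarrow> ('a \<Rightarrow> 'a \<Rightarrow> bool) \<Rightarrow> 'a \<Rightarrow> 'a \<Rightarrow> real" where
  "nlap V E u v = ((if u = v then degree V E u else 0) - adj E u v)
                   / sqrt (degree V E u * degree V E v)"

definition vboundary :: "'a set \<Rightarrow> ('a \<Rightarrow> 'a \<Rightarrow> bool) \<Rightarrow> 'a set \<Rightarrow> 'a set" where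
  "vboundary V E S = {u \<in> V - S. \<exists>v\<in>S. E u v}"

definition supp :: "'a set \<Rightarrow> ('a \<Rightarrow> real) \<Rightarrow> 'a set" where
  "supp V b = {v \<in> V. b v \<noteq> 0}"

definition boundable :: "'a set \<Rightarrow> ('a \<Rightarrow> 'a \<Rightarrow> bool) \<Rightarrow> ('a \<Rightarrow> real) \<Rightarrow> 'a set \<Rightarrow> bool" where
  "boundable V E b S \<longleftrightarrow> S \<subseteq> V - supp V b
     \<and> vboundary V E S \<inter> supp V b \<noteq> {}
     \<and> connected_on E S \<and> vboundary V E S \<noteq> {}"

definition is_local_solution ::
  "'a set \<Rightarrow> ('a \<Rightarrow> 'a \<Rightarrow> bool) \<Rightarrow> 'a set \<Rightarrow> ('a \<Rightarrow> real) \<Rightarrow> ('a \<Rightarrow> real) \<Rightarrow> bool" where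
  "is_local_solution V E S b x \<longleftrightarrow>
     (\<forall>v\<in>S. x v = (\<Sum>u\<in>{u \<in> V. E v u}. x u / sqrt (degree V E v * degree V E u)))
     \<and> (\<forall>v\<in>V - S. x v = b v)"

definition vnorm :: "'a set \<Rightarrow> ('a \<Rightarrow> real) \<Rightarrow> real" where
  "vnorm S f = sqrt (\<Sum>v\<in>S. (f v)\<^sup>2)"

definition matvec :: "'a set \<Rightarrow> ('a \<Rightarrow> 'a \<Rightarrow> real) \<Rightarrow> ('a \<Rightarrow> real) \<Rightarrow> 'a \<Rightarrow> real" where
  "matvec S M f = (\<lambda>v. if v \<in> S then (\<Sum>u\<in>S. M v u * f u) else 0)"

text \<open>Heat kernel of the principal submatrix L_S applied to a vector: exp(-t L_S) f.\<close>
definition heat_apply ::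
  "'a set \<Rightarrow> ('a \<Rightarrow> 'a \<Rightarrow> bool) \<Rightarrow> 'a set \<Rightarrow> real \<Rightarrow> ('a \<Rightarrow> real) \<Rightarrow> 'a \<Rightarrow> real" where
  "heat_apply V E S t f = (\<lambda>v. \<Sum>k. ((- t) ^ k / fact k) * (((matvec S (nlap V E)) ^^ k) f) v)"

definition bvec1 :: "'a set \<Rightarrow> ('a \<Rightarrow> 'a \<Rightarrow> bool) \<Rightarrow> 'a set \<Rightarrow> ('a \<Rightarrow> real) \<Rightarrow> 'a \<Rightarrow> real" where
  "bvec1 V E S b = (\<lambda>v. if v \<in> S then
      (\<Sum>u\<in>vboundary V E S. adj E v u * b u / sqrt (degree V E v * degree V E u)) else 0)"

end

theory Submission
  imports Defs "HOL-Library.Transitive_Closure_Table"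
begin


definition ip :: "'a set \<Rightarrow> ('a \<Rightarrow> real) \<Rightarrow> ('a \<Rightarrow> real) \<Rightarrow> real" where
  "ip S f g = (\<Sum>v\<in>S. f v * g v)"

definition orthn :: "'a set \<Rightarrow> (nat \<Rightarrow> 'a \<Rightarrow> real) \<Rightarrow> nat \<Rightarrow> bool" where
  "orthn S e m \<longleftrightarrow> (\<forall>i<m. \<forall>j<m. ip S (e i) (e j) = (if i = j then 1 else 0))"

lemma ip_comm: "ip S f g = ip S g f"
  unfolding ip_def by (simp add: mult.commute)

lemma ip_nonneg: "ip S f f \<ge> 0"
  unfolding ip_def by (simp add: sum_nonneg)

lemma ip_sum_left: "ip S (\<lambda>v. \<Sum>i\<in>I. c i * e i v) g = (\<Sum>i\<in>I. c i * ip S (e i) g)"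
  unfolding ip_def
  by (simp add: sum_distrib_right sum_distrib_left mult.assoc sum.swap[of _ S])

lemma ip_sum_right: "ip S g (\<lambda>v. \<Sum>i\<in>I. c i * e i v) = (\<Sum>i\<in>I. c i * ip S g (e i))"
  using ip_sum_left[of S c e I g] by (simp add: ip_comm)

lemma ip_diff_left: "ip S (\<lambda>v. f v - g v) h = ip S f h - ip S g h"
  unfolding ip_def by (simp add: left_diff_distrib sum_subtractf)

lemma ip_diff_right: "ip S h (\<lambda>v. f v - g v) = ip S h f - ip S h g"
  unfolding ip_def by (simp add: right_diff_distrib sum_subtractf)

lemma ip_scale_left: "ip S (\<lambda>v. c * f v) g = c * ip S f g"
  unfolding ip_def by (simp add: sum_distrib_left mult.assoc)

lemma ip_scale_right: "ip S g (\<lambda>v. c * f v) = c * ip S g f"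
  using ip_scale_left[of S c f g] by (simp add: ip_comm)

lemma ip_cong: "(\<And>v. v \<in> S \<Longrightarrow> f v = f' v) \<Longrightarrow> (\<And>v. v \<in> S \<Longrightarrow> g v = g' v) \<Longrightarrow> ip S f g = ip S f' g'"
  unfolding ip_def by (rule sum.cong) auto

lemma orthn_combo:
  assumes "orthn S e m"
  shows "ip S (\<lambda>v. \<Sum>i<m. a i * e i v) (\<lambda>v. \<Sum>i<m. b i * e i v) = (\<Sum>i<m. a i * b i)"
proof -
  have "ip S (\<lambda>v. \<Sum>i<m. a i * e i v) (\<lambda>v. \<Sum>i<m. b i * e i v)
      = (\<Sum>i<m. a i * (\<Sum>j<m. b j * ip S (e i) (e j)))"
    by (simp add: ip_sum_left ip_sum_right)
  also have "\<dots> = (\<Sum>i<m. a i * b i)"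
  proof (rule sum.cong[OF refl])
    fix i assume i: "i \<in> {..<m}"
    have "(\<Sum>j<m. b j * ip S (e i) (e j)) = (\<Sum>j<m. if j = i then b j else 0)"
      using assms i unfolding orthn_def by (intro sum.cong) auto
    also have "\<dots> = b i" using i by simp
    finally show "a i * (\<Sum>j<m. b j * ip S (e i) (e j)) = a i * b i" by simp
  qed
  finally show ?thesis .
qed

lemma orthn_coef:
  assumes "orthn S e m" "j < m"
  shows "ip S (\<lambda>v. \<Sum>i<m. a i * e i v) (e j) = a j"
proof -
  have "ip S (\<lambda>v. \<Sum>i<m. a i * e i v) (e j) = (\<Sum>i<m. a i * ip S (e i) (e j))"
    by (simp add: ip_sum_left)
  also have "\<dots> = (\<Sum>i<m. if i = j then a i else 0)"
    using assms unfolding orthn_def by (intro sum.cong) auto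
  also have "\<dots> = a j" using assms by simp
  finally show ?thesis .
qed

definition resid :: "'a set \<Rightarrow> (nat \<Rightarrow> 'a \<Rightarrow> real) \<Rightarrow> nat \<Rightarrow> ('a \<Rightarrow> real) \<Rightarrow> 'a \<Rightarrow> real" where
  "resid S e m f = (\<lambda>v. f v - (\<Sum>i<m. ip S f (e i) * e i v))"

lemma resid_orth:
  assumes "orthn S e m" "j < m"
  shows "ip S (resid S e m f) (e j) = 0"
  unfolding resid_def ip_diff_left using orthn_coef[OF assms] by simp

lemma resid_norm:
  assumes "orthn S e m"
  shows "ip S (resid S e m f) (resid S e m f) = ip S f f - (\<Sum>i<m. (ip S f (e i))\<^sup>2)"
proof -
  let ?p = "\<lambda>v. \<Sum>i<m. ip S f (e i) * e i v"
  have 1: "ip S f ?p = (\<Sum>i<m. (ip S f (e i))\<^sup>2)"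
    by (simp add: ip_sum_right power2_eq_square)
  have 2: "ip S ?p ?p = (\<Sum>i<m. (ip S f (e i))\<^sup>2)"
    using orthn_combo[OF assms] by (simp add: power2_eq_square)
  have 3: "ip S ?p f = (\<Sum>i<m. (ip S f (e i))\<^sup>2)" using 1 by (simp add: ip_comm)
  show ?thesis unfolding resid_def ip_diff_left ip_diff_right using 1 2 3 by simp
qed

lemma bessel:
  assumes "orthn S e m"
  shows "(\<Sum>i<m. (ip S f (e i))\<^sup>2) \<le> ip S f f"
  using resid_norm[OF assms, of f] ip_nonneg[of S "resid S e m f"] by simp

lemma orthn_card:
  assumes "orthn S e m" "finite S"
  shows "(\<Sum>v\<in>S. \<Sum>i<m. (e i v)\<^sup>2) = real m"
proof -
  have "(\<Sum>v\<in>S. \<Sum>i<m. (e i v)\<^sup>2) = (\<Sum>i<m. ip S (e i) (e i))"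
    unfolding ip_def by (simp add: sum.swap[of _ S] power2_eq_square)
  also have "\<dots> = (\<Sum>i<m. 1)" using assms(1) unfolding orthn_def by (intro sum.cong) auto
  finally show ?thesis by simp
qed

lemma delta_ip:
  assumes "finite S" "v \<in> S"
  shows "ip S (\<lambda>u. if u = v then 1 else 0) g = g v"
proof -
  have "ip S (\<lambda>u. if u = v then 1 else 0) g = (\<Sum>u\<in>S. if u = v then g u else 0)"
    unfolding ip_def by (intro sum.cong) auto
  also have "\<dots> = g v" using assms by simp
  finally show ?thesis .
qed

lemma orthn_row_le1:
  assumes "orthn S e m" "finite S" "v \<in> S"
  shows "(\<Sum>i<m. (e i v)\<^sup>2) \<le> 1"
  using bessel[OF assms(1), of "\<lambda>u. if u = v then 1 else 0"] assms
  by (simp add: delta_ip)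

lemma orthn_le_card:
  assumes "orthn S e m" "finite S"
  shows "m \<le> card S"
proof -
  have "real m = (\<Sum>v\<in>S. \<Sum>i<m. (e i v)\<^sup>2)" using orthn_card[OF assms] by simp
  also have "\<dots> \<le> (\<Sum>v\<in>S. 1)" by (rule sum_mono) (use orthn_row_le1[OF assms] in auto)
  finally show ?thesis by simp
qed

lemma orthn_extend:
  assumes "orthn S e m" "ip S g g = 1" "\<And>i. i < m \<Longrightarrow> ip S g (e i) = 0"
  shows "orthn S (e(m := g)) (Suc m)"
  using assms unfolding orthn_def
  by (auto simp: less_Suc_eq ip_comm)

lemma normalize_exists:
  assumes "ip S g g > 0" "\<And>i. i < m \<Longrightarrow> ip S g (e i) = 0"
  shows "\<exists>h. (\<forall>u. u \<notin> S \<longrightarrow> h u = 0) \<and> ip S h h = 1 \<and> (\<forall>i<m. ip S h (e i) = 0)"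
proof -
  define c where "c = 1 / sqrt (ip S g g)"
  define h where "h = (\<lambda>u. if u \<in> S then c * g u else 0)"
  have hh: "ip S h h = c * c * ip S g g"
    unfolding h_def by (simp add: ip_def sum_distrib_left mult_ac)
  have "c * c * ip S g g = 1" unfolding c_def using assms(1)
    by (simp add: field_simps)
  moreover have "ip S h (e i) = c * ip S g (e i)" for i
    unfolding h_def by (simp add: ip_def sum_distrib_left mult_ac)
  ultimately show ?thesis using hh assms(2) by (intro exI[of _ h]) (auto simp: h_def)
qed

lemma orthn_complete:
  assumes "orthn S e (card S)" "finite S" "v \<in> S"
  shows "f v = (\<Sum>i<card S. ip S f (e i) * e i v)"
proof -
  let ?g = "resid S e (card S) f"
  have "ip S ?g ?g = 0"
  proof (rule ccontr)
    assume "ip S ?g ?g \<noteq> 0"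
    then have "ip S ?g ?g > 0" using ip_nonneg[of S ?g] by linarith
    then obtain h where h: "ip S h h = 1" "\<forall>i<card S. ip S h (e i) = 0"
      using normalize_exists[of S ?g "card S" e] resid_orth[OF assms(1)] by blast
    have "orthn S (e(card S := h)) (Suc (card S))"
      by (rule orthn_extend[OF assms(1) h(1)]) (use h in auto)
    from orthn_le_card[OF this assms(2)] show False by simp
  qed
  then have "(\<Sum>u\<in>S. (?g u)\<^sup>2) = 0" unfolding ip_def by (simp add: power2_eq_square)
  then have "?g v = 0" using assms(2,3) by (simp add: sum_nonneg_eq_0_iff)
  then show ?thesis unfolding resid_def by simp
qed

lemma orthn_exists_new:
  assumes "orthn S e m" "finite S" "m < card S"
  shows "\<exists>h. (\<forall>u. u \<notin> S \<longrightarrow> h u = 0) \<and> ip S h h = 1 \<and> (\<forall>i<m. ip S h (e i) = 0)"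
proof -
  have "\<exists>v\<in>S. (\<Sum>i<m. (e i v)\<^sup>2) < 1"
  proof (rule ccontr)
    assume "\<not> ?thesis"
    then have "(\<Sum>v\<in>S. 1) \<le> (\<Sum>v\<in>S. \<Sum>i<m. (e i v)\<^sup>2)" by (intro sum_mono) auto
    then show False using orthn_card[OF assms(1,2)] assms(3) by simp
  qed
  then obtain v where v: "v \<in> S" "(\<Sum>i<m. (e i v)\<^sup>2) < 1" by blast
  let ?d = "\<lambda>u. if u = v then 1 else (0::real)"
  let ?g = "resid S e m ?d"
  have "ip S ?g ?g = 1 - (\<Sum>i<m. (e i v)\<^sup>2)"
    using resid_norm[OF assms(1), of ?d] assms(2) v(1) by (simp add: delta_ip)
  then have "ip S ?g ?g > 0" using v by simp
  then show ?thesis using normalize_exists[of S ?g m e] resid_orth[OF assms(1)] by blast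
qed




lemma cont_ip: "continuous_on UNIV (\<lambda>f::'a \<Rightarrow> real. ip S f g)"
  unfolding ip_def
  by (intro continuous_on_sum continuous_on_mult_right continuous_on_product_coordinates)

lemma cont_coord: "continuous_on UNIV (\<lambda>f::'a \<Rightarrow> real. f u)"
  by (rule continuous_on_product_coordinates)

definition qf :: "'a set \<Rightarrow> ('a \<Rightarrow> 'a \<Rightarrow> real) \<Rightarrow> ('a \<Rightarrow> real) \<Rightarrow> real" where
  "qf S M f = ip S f (matvec S M f)"

lemma qf_expand: "qf S M f = (\<Sum>v\<in>S. \<Sum>u\<in>S. f v * M v u * f u)"
  unfolding qf_def ip_def matvec_def by (simp add: sum_distrib_left mult.assoc)

lemma cont_qf: "continuous_on UNIV (\<lambda>f::'a \<Rightarrow> real. qf S M f)"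
  unfolding qf_expand
  by (intro continuous_on_sum continuous_on_mult continuous_on_mult_right continuous_on_const
        continuous_on_product_coordinates)

lemma compact_box:
  "compact {f::'a \<Rightarrow> real. \<forall>u. f u \<in> (if u \<in> S then {-1..1} else {0})}"
proof -
  let ?X = "\<lambda>u::'a. if u \<in> S then {-1..1::real} else {0}"
  have "compactin (product_topology (\<lambda>i. euclidean) UNIV) (PiE UNIV ?X)"
    unfolding compactin_PiE by auto
  then have "compact (PiE UNIV ?X)"
    by (simp add: euclidean_product_topology)
  moreover have "PiE UNIV ?X = {f. \<forall>u. f u \<in> ?X u}"
    by (auto simp: PiE_def Pi_def)
  ultimately show ?thesis by simp
qed

lemma max_exists:
  fixes e :: "nat \<Rightarrow> 'a \<Rightarrow> real"
  assumes "finite S" "orthn S e m" "m < card S"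
  defines "C \<equiv> {f. (\<forall>u. u \<notin> S \<longrightarrow> f u = 0) \<and> (\<forall>i<m. ip S f (e i) = 0) \<and> ip S f f = 1}"
  shows "\<exists>v\<in>C. \<forall>w\<in>C. qf S M w \<le> qf S M v"
proof (rule continuous_attains_sup)
  obtain h where "(\<forall>u. u \<notin> S \<longrightarrow> h u = 0) \<and> ip S h h = 1 \<and> (\<forall>i<m. ip S h (e i) = 0)"
    using orthn_exists_new[OF assms(2,1,3)] by blast
  then have "h \<in> C" unfolding C_def by simp
  then show "C \<noteq> {}" by blast
  show "continuous_on C (qf S M)" by (rule continuous_on_subset[OF cont_qf]) simp
  have sub: "C \<subseteq> {f. \<forall>u. f u \<in> (if u \<in> S then {-1..1} else {0})}"
  proof
    fix f assume f: "f \<in> C"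
    have "\<bar>f u\<bar> \<le> 1" if "u \<in> S" for u
    proof -
      have "(f u)\<^sup>2 \<le> (\<Sum>v\<in>S. (f v)\<^sup>2)"
        using that assms(1) by (intro member_le_sum) auto
      also have "\<dots> = 1" using f unfolding C_def ip_def by (simp add: power2_eq_square)
      finally show ?thesis using abs_le_square_iff[of "f u" 1] by simp
    qed
    then show "f \<in> {f. \<forall>u. f u \<in> (if u \<in> S then {-1..1} else {0})}"
    proof (intro CollectI allI)
      fix u show "f u \<in> (if u \<in> S then {-1..1} else {0})"
      proof (cases "u \<in> S")
        case True then show ?thesis using \<open>\<And>u. u \<in> S \<Longrightarrow> \<bar>f u\<bar> \<le> 1\<close>[of u] by (simp add: abs_le_iff)
      next
        case False then show ?thesis using f unfolding C_def by simp
      qed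
    qed
  qed
  have cl: "closed C"
  proof -
    have "C = (\<Inter>u\<in>-S. {f. f u = 0}) \<inter> (\<Inter>i\<in>{..<m}. {f. ip S f (e i) = 0}) \<inter> {f. ip S f f = 1}"
      unfolding C_def by auto
    moreover have "closed (\<Inter>u\<in>-S. {f::'a\<Rightarrow>real. f u = 0})"
      by (intro closed_INT ballI closed_Collect_eq cont_coord continuous_on_const)
    moreover have "closed (\<Inter>i\<in>{..<m}. {f::'a\<Rightarrow>real. ip S f (e i) = 0})"
      by (intro closed_INT ballI closed_Collect_eq cont_ip continuous_on_const)
    moreover have "closed {f::'a\<Rightarrow>real. ip S f f = 1}"
      unfolding ip_def
      by (intro closed_Collect_eq continuous_on_sum continuous_on_mult continuous_on_const
          continuous_on_product_coordinates)
    ultimately show ?thesis by (simp only:) (intro closed_Int)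
  qed
  have eq: "{f. \<forall>u. f u \<in> (if u \<in> S then {-1..1} else {0})} \<inter> C = C" by (rule Int_absorb1[OF sub])
  show "compact C" using compact_Int_closed[OF compact_box[of S] cl] unfolding eq .
qed

lemma abs_lt2: "(c::real) < 2 * (\<bar>c\<bar> + 1)" by (cases "c \<ge> 0") (simp_all add: abs_if)

lemma ip_add_left: "ip S (\<lambda>x. f x + t * g x) h = ip S f h + t * ip S g h"
  unfolding ip_def by (simp add: sum.distrib sum_distrib_left algebra_simps)

lemma ip_add_right: "ip S h (\<lambda>x. f x + t * g x) = ip S h f + t * ip S h g"
  using ip_add_left[of S f t g h] by (simp add: ip_comm)

lemma ip_matvec_sym:
  assumes sym: "\<forall>u\<in>S. \<forall>v\<in>S. M u v = M v u"
  shows "ip S f (matvec S M g) = ip S (matvec S M f) g"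
proof -
  have "ip S f (matvec S M g) = (\<Sum>v\<in>S. \<Sum>u\<in>S. f v * M v u * g u)"
    unfolding ip_def matvec_def by (simp add: sum_distrib_left mult.assoc)
  also have "\<dots> = (\<Sum>u\<in>S. \<Sum>v\<in>S. f v * M v u * g u)" by (rule sum.swap)
  also have "\<dots> = (\<Sum>u\<in>S. \<Sum>v\<in>S. M u v * f v * g u)"
    using sym by (intro sum.cong refl) (simp add: mult_ac)
  also have "\<dots> = ip S (matvec S M f) g"
    unfolding ip_def matvec_def by (simp add: sum_distrib_right)
  finally show ?thesis .
qed

lemma qf_add:
  "qf S M (\<lambda>x. f x + t * g x) = qf S M f + t * (ip S f (matvec S M g) + ip S g (matvec S M f)) + t\<^sup>2 * qf S M g"
proof -
  have "qf S M (\<lambda>x. f x + t * g x) = (\<Sum>v\<in>S. \<Sum>u\<in>S. f v * M v u * f u + t * (f v * M v u * g u + g v * M v u * f u) + t\<^sup>2 * (g v * M v u * g u))"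
    unfolding qf_expand by (intro sum.cong refl) (simp add: algebra_simps power2_eq_square)
  also have "\<dots> = qf S M f + t * ((\<Sum>v\<in>S. \<Sum>u\<in>S. f v * M v u * g u) + (\<Sum>v\<in>S. \<Sum>u\<in>S. g v * M v u * f u)) + t\<^sup>2 * qf S M g"
    unfolding qf_expand by (simp add: sum.distrib sum_distrib_left distrib_left)
  also have "(\<Sum>v\<in>S. \<Sum>u\<in>S. f v * M v u * g u) = ip S f (matvec S M g)"
    unfolding ip_def matvec_def by (simp add: sum_distrib_left mult.assoc)
  also have "(\<Sum>v\<in>S. \<Sum>u\<in>S. g v * M v u * f u) = ip S g (matvec S M f)"
    unfolding ip_def matvec_def by (simp add: sum_distrib_left mult.assoc)
  finally show ?thesis .
qed

lemma qf_scale: "qf S M (\<lambda>x. c * f x) = c\<^sup>2 * qf S M f"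
  unfolding qf_expand by (simp add: sum_distrib_left power2_eq_square mult_ac)

lemma zero_of_ip_zero:
  assumes "finite S" "ip S f f = 0" "v \<in> S"
  shows "f v = 0"
proof -
  have "(\<Sum>u\<in>S. (f u)\<^sup>2) = 0" using assms(2) unfolding ip_def by (simp add: power2_eq_square)
  then show ?thesis using assms(1,3) by (simp add: sum_nonneg_eq_0_iff)
qed

lemma eig_step:
  fixes e :: "nat \<Rightarrow> 'a \<Rightarrow> real"
  assumes fin: "finite S" and sym: "\<forall>u\<in>S. \<forall>v\<in>S. M u v = M v u"
    and orth: "orthn S e m" and mS: "m < card S"
    and eig: "\<And>i v. i < m \<Longrightarrow> v \<in> S \<Longrightarrow> matvec S M (e i) v = l i * e i v"
  shows "\<exists>v. (\<forall>u. u \<notin> S \<longrightarrow> v u = 0) \<and> ip S v v = 1 \<and> (\<forall>i<m. ip S v (e i) = 0)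
            \<and> (\<forall>u\<in>S. matvec S M v u = qf S M v * v u)"
proof -
  define C where "C \<equiv> {f. (\<forall>u. u \<notin> S \<longrightarrow> f u = 0) \<and> (\<forall>i<m. ip S f (e i) = 0) \<and> ip S f f = 1}"
  obtain v where vC: "v \<in> C" and vmax: "\<And>w. w \<in> C \<Longrightarrow> qf S M w \<le> qf S M v"
    using max_exists[OF fin orth mS, of M] unfolding C_def by blast
  have v: "\<forall>u. u \<notin> S \<longrightarrow> v u = 0" "\<forall>i<m. ip S v (e i) = 0" "ip S v v = 1"
    using vC unfolding C_def by auto
  let ?q = "qf S M v"
  have claim1: "qf S M u \<le> ?q * ip S u u"
    if u: "\<forall>x. x \<notin> S \<longrightarrow> u x = 0" "\<forall>i<m. ip S u (e i) = 0" for u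
  proof (cases "ip S u u = 0")
    case True
    then have "\<And>x. x \<in> S \<Longrightarrow> u x = 0" using zero_of_ip_zero[OF fin] by blast
    then have "qf S M u = 0" unfolding qf_expand by simp
    then show ?thesis using True by simp
  next
    case False
    then have pos: "ip S u u > 0" using ip_nonneg[of S u] by linarith
    define c where "c = 1 / sqrt (ip S u u)"
    have cc: "c\<^sup>2 * ip S u u = 1" unfolding c_def using pos by (simp add: power_divide)
    define w where "w = (\<lambda>x. c * u x)"
    have "w \<in> C" unfolding C_def w_def using u cc
      by (simp add: ip_scale_left ip_scale_right power2_eq_square mult.assoc)
    then have "qf S M w \<le> ?q" by (rule vmax)
    moreover have "c\<^sup>2 * (?q * ip S u u) = ?q" using cc by (simp add: mult_ac)
    ultimately have "c\<^sup>2 * qf S M u \<le> c\<^sup>2 * (?q * ip S u u)" unfolding w_def qf_scale by (simp only:)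
    moreover have "c\<^sup>2 > 0" unfolding c_def using pos by simp
    ultimately show ?thesis by simp
  qed
  have claim2: "ip S w (matvec S M v) = 0"
    if w: "\<forall>x. x \<notin> S \<longrightarrow> w x = 0" "\<forall>i<m. ip S w (e i) = 0" "ip S w v = 0" for w
  proof -
    let ?a = "ip S w (matvec S M v)"
    let ?c = "?q * ip S w w - qf S M w"
    have ineq: "2 * t * ?a \<le> t\<^sup>2 * ?c" for t
    proof -
      let ?u = "\<lambda>x. v x + t * w x"
      have u1: "\<forall>x. x \<notin> S \<longrightarrow> ?u x = 0" using v w by simp
      have u2: "\<forall>i<m. ip S ?u (e i) = 0"
        using v w by (simp add: ip_add_left)
      have uu: "ip S ?u ?u = 1 + t\<^sup>2 * ip S w w"
      proof -
        have vw: "ip S v w = 0" using w(3) by (simp add: ip_comm)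
        show ?thesis using v(3) w(3) vw by (simp add: ip_add_left ip_add_right power2_eq_square algebra_simps)
      qed
      have "qf S M ?u = ?q + t * (2 * ?a) + t\<^sup>2 * qf S M w"
      proof -
        have "ip S v (matvec S M w) = ?a" by (rule trans[OF ip_matvec_sym[OF sym] ip_comm])
        then show ?thesis unfolding qf_add by simp
      qed
      moreover have "qf S M ?u \<le> ?q * ip S ?u ?u" using claim1[OF u1 u2] .
      ultimately show ?thesis unfolding uu by (simp add: algebra_simps)
    qed
    show ?thesis
    proof (rule ccontr)
      assume a0: "?a \<noteq> 0"
      define d where "d = \<bar>?c\<bar> + 1"
      have d0: "d > 0" unfolding d_def by simp
      have "2 * (?a / d) * ?a \<le> (?a / d)\<^sup>2 * ?c" using ineq .
      then have "2 * ?a\<^sup>2 * d \<le> ?a\<^sup>2 * ?c" using d0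
      proof -
        have "(2 * (?a / d) * ?a) * d\<^sup>2 \<le> ((?a / d)\<^sup>2 * ?c) * d\<^sup>2"
          by (rule mult_right_mono[OF \<open>2 * (?a / d) * ?a \<le> (?a / d)\<^sup>2 * ?c\<close>]) simp
        moreover have "(2 * (?a / d) * ?a) * d\<^sup>2 = 2 * ?a\<^sup>2 * d" using d0
          by (simp add: power2_eq_square)
        moreover have "((?a / d)\<^sup>2 * ?c) * d\<^sup>2 = ?a\<^sup>2 * ?c" using d0
          by (simp add: power2_eq_square)
        ultimately show ?thesis by simp
      qed
      moreover have "?a\<^sup>2 > 0" using a0 by simp
      moreover have "?c < 2 * d" unfolding d_def using abs_lt2[of ?c] by simp
      ultimately show False
      proof -
        have "?a\<^sup>2 * ?c < ?a\<^sup>2 * (2 * d)" by (rule mult_strict_left_mono) fact+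
        then show False using \<open>2 * ?a\<^sup>2 * d \<le> ?a\<^sup>2 * ?c\<close> by (simp add: mult_ac)
      qed
    qed
  qed
  define w where "w = (\<lambda>x. if x \<in> S then matvec S M v x - ?q * v x else 0)"
  have w1: "\<forall>x. x \<notin> S \<longrightarrow> w x = 0" unfolding w_def by simp
  have ipw: "ip S w g = ip S (matvec S M v) g - ?q * ip S v g" for g
  proof -
    have "ip S w g = ip S (\<lambda>x. matvec S M v x - ?q * v x) g"
      unfolding w_def by (rule ip_cong) auto
    then show ?thesis by (simp add: ip_diff_left ip_scale_left)
  qed
  have w2: "\<forall>i<m. ip S w (e i) = 0"
  proof (intro allI impI)
    fix i assume i: "i < m"
    have "ip S (matvec S M v) (e i) = ip S v (matvec S M (e i))"
      using ip_matvec_sym[OF sym] by simp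
    also have "\<dots> = ip S v (\<lambda>x. l i * e i x)" by (rule ip_cong) (use eig i in auto)
    also have "\<dots> = 0" using v i by (simp add: ip_scale_right)
    finally show "ip S w (e i) = 0" using ipw v i by simp
  qed
  have w3: "ip S w v = 0" using ipw[of v] v unfolding qf_def by (simp add: ip_comm)
  have "ip S w (matvec S M v) = 0" by (rule claim2[OF w1 w2 w3])
  then have "ip S w w = 0"
  proof -
    have "ip S w w = ip S w (\<lambda>x. matvec S M v x - ?q * v x)"
      unfolding w_def by (rule ip_cong) auto
    then show ?thesis using \<open>ip S w (matvec S M v) = 0\<close> w3 by (simp add: ip_diff_right ip_scale_right)
  qed
  then have "\<forall>u\<in>S. matvec S M v u = ?q * v u"
    using zero_of_ip_zero[OF fin] unfolding w_def by fastforce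
  then show ?thesis using v by blast
qed

lemma spectral_k:
  assumes fin: "finite S" and sym: "\<forall>u\<in>S. \<forall>v\<in>S. M u v = M v u"
  shows "k \<le> card S \<Longrightarrow> \<exists>e l. orthn S e k \<and> (\<forall>i<k. \<forall>u. u \<notin> S \<longrightarrow> e i u = 0)
           \<and> (\<forall>i<k. \<forall>v\<in>S. matvec S M (e i) v = l i * e i v)"
proof (induction k)
  case 0
  show ?case by (auto simp: orthn_def)
next
  case (Suc k)
  then obtain e l where IH: "orthn S e k" "\<forall>i<k. \<forall>u. u \<notin> S \<longrightarrow> e i u = 0"
    "\<forall>i<k. \<forall>v\<in>S. matvec S M (e i) v = l i * e i v" by auto
  have "k < card S" using Suc.prems by simp
  from eig_step[OF fin sym IH(1) this, of l] IH(3)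
  obtain v where v: "\<forall>u. u \<notin> S \<longrightarrow> v u = 0" "ip S v v = 1" "\<forall>i<k. ip S v (e i) = 0"
     "\<forall>u\<in>S. matvec S M v u = qf S M v * v u" by blast
  have "orthn S (e(k := v)) (Suc k)" using orthn_extend[OF IH(1) v(2)] v(3) by blast
  moreover have "\<forall>i<Suc k. \<forall>u. u \<notin> S \<longrightarrow> (e(k := v)) i u = 0"
    using IH(2) v(1) by (auto simp: less_Suc_eq)
  moreover have "\<forall>i<Suc k. \<forall>u\<in>S. matvec S M ((e(k := v)) i) u = (l(k := qf S M v)) i * (e(k := v)) i u"
    using IH(3) v(4) by (auto simp: less_Suc_eq)
  ultimately show ?case by blast
qed

lemma spectral:
  assumes fin: "finite S" and sym: "\<forall>u\<in>S. \<forall>v\<in>S. M u v = M v u"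
  shows "\<exists>e l. orthn S e (card S) \<and> (\<forall>i<card S. \<forall>u. u \<notin> S \<longrightarrow> e i u = 0)
           \<and> (\<forall>i<card S. \<forall>v\<in>S. matvec S M (e i) v = l i * e i v)"
  using spectral_k[OF fin sym, of "card S"] by simp




lemma matvec_apply: "v \<in> S \<Longrightarrow> matvec S M f v = (\<Sum>u\<in>S. M v u * f u)"
  unfolding matvec_def by simp

lemma powers_eig:
  assumes fin: "finite S" and orth: "orthn S e (card S)"
    and eig: "\<forall>i<card S. \<forall>v\<in>S. matvec S M (e i) v = l i * e i v"
    and v: "v \<in> S"
  shows "((matvec S M) ^^ k) f v = (\<Sum>i<card S. ip S f (e i) * l i ^ k * e i v)"
  using v
proof (induction k arbitrary: v)
  case 0
  then show ?case using orthn_complete[OF orth fin 0] by simp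
next
  case (Suc k)
  have "((matvec S M) ^^ Suc k) f v = (\<Sum>u\<in>S. M v u * ((matvec S M) ^^ k) f u)"
    using Suc.prems by (simp add: matvec_apply)
  also have "\<dots> = (\<Sum>u\<in>S. M v u * (\<Sum>i<card S. ip S f (e i) * l i ^ k * e i u))"
    using Suc.IH by (intro sum.cong) auto
  also have "\<dots> = (\<Sum>i<card S. ip S f (e i) * l i ^ k * (\<Sum>u\<in>S. M v u * e i u))"
    by (simp add: sum_distrib_left sum_distrib_right sum.swap[of _ S] mult_ac)
  also have "\<dots> = (\<Sum>i<card S. ip S f (e i) * l i ^ k * (l i * e i v))"
    using eig Suc.prems by (intro sum.cong) (auto simp: matvec_apply[symmetric])
  also have "\<dots> = (\<Sum>i<card S. ip S f (e i) * l i ^ Suc k * e i v)"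
    by (simp add: mult_ac)
  finally show ?case .
qed

lemma pw: "(- (a * b)) ^ k = (- a) ^ k * (b::real) ^ k"
  by (metis minus_mult_left power_mult_distrib)

lemma heat_eig:
  assumes fin: "finite S" and orth: "orthn S e (card S)"
    and eig: "\<forall>i<card S. \<forall>v\<in>S. matvec S (nlap V E) (e i) v = l i * e i v"
    and v: "v \<in> S"
  shows "heat_apply V E S t f v = (\<Sum>i<card S. ip S f (e i) * exp (- t * l i) * e i v)"
proof -
  have "(\<lambda>k. (- t) ^ k / fact k * ((matvec S (nlap V E)) ^^ k) f v) sums
        (\<Sum>i<card S. ip S f (e i) * e i v * exp (- t * l i))"
  proof -
    have eq: "(- t) ^ k / fact k * ((matvec S (nlap V E)) ^^ k) f v
          = (\<Sum>i<card S. ip S f (e i) * e i v * ((- t * l i) ^ k /\<^sub>R fact k))" for k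
      unfolding powers_eig[OF fin orth eig v]
      by (simp add: sum_distrib_left pw divide_inverse mult_ac)
    show ?thesis unfolding eq
      by (intro sums_sum sums_mult exp_converges)
  qed
  then show ?thesis unfolding heat_apply_def
    by (simp add: sums_iff mult_ac)
qed




lemma scalar_bound:
  fixes \<gamma> T lam :: real and N :: nat
  assumes g0: "0 < \<gamma>" and T0: "T > 0" and N1: "N \<ge> 1" and hle: "T / real N \<le> \<gamma>"
    and l0: "lam > 0" and tail: "exp (- T * lam) \<le> \<gamma>"
  shows "\<bar>1 - (\<Sum>j = 1..N. T / real N * lam * exp (- (real j * T / real N) * lam))\<bar> \<le> \<gamma> * (1 + lam)"
proof -
  define h where "h = T / real N"
  define a where "a = h * lam"
  define q where "q = exp (- a)"
  have h0: "h > 0" unfolding h_def using T0 N1 by simp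
  have a0: "a > 0" unfolding a_def using h0 l0 by simp
  have q0: "q > 0" and q1: "q < 1" unfolding q_def using a0 by auto
  have termq: "exp (- (real j * T / real N) * lam) = q ^ j" for j :: nat
  proof -
    have "- (real j * T / real N) * lam = real j * (- a)" unfolding a_def h_def by simp
    then show ?thesis unfolding q_def using exp_of_nat_mult[of j "-a"] by simp
  qed
  define P where "P = (\<Sum>j = 1..N. q ^ j)"
  have sumeq: "(\<Sum>j = 1..N. T / real N * lam * exp (- (real j * T / real N) * lam)) = a * P"
    unfolding P_def termq sum_distrib_left a_def h_def by simp
  have gp: "(1 - q) * P = q - q ^ Suc N" unfolding P_def using sum_gp_multiplied[OF N1, of q] by simp
  have qN: "q ^ N = exp (- T * lam)"
  proof -
    have "exp (- T * lam) = exp (real N * (- a))" unfolding a_def h_def using N1 by simp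
    then show ?thesis unfolding q_def using exp_of_nat_mult[of N "-a"] by simp
  qed
  have aq: "a * q \<le> 1 - q"
  proof -
    have "(1 + a) * q \<le> exp a * q" using q0 exp_ge_add_one_self[of a] by (intro mult_right_mono) auto
    also have "exp a * q = 1" unfolding q_def by (simp add: exp_minus)
    finally show ?thesis by (simp add: algebra_simps)
  qed
  have qa: "q + a \<ge> 1" unfolding q_def using exp_ge_add_one_self[of "-a"] by simp
  define phi where "phi = 1 - a * P"
  have key: "(1 - q) * phi = (1 - q) - a * q + a * q * q ^ N"
  proof -
    have "(1 - q) * phi = (1 - q) - a * ((1 - q) * P)" unfolding phi_def by (simp add: algebra_simps)
    also have "\<dots> = (1 - q) - a * (q - q ^ Suc N)" unfolding gp ..
    finally show ?thesis by (simp add: algebra_simps)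
  qed
  have qN0: "q ^ N \<ge> 0" using q0 by simp
  have lo: "(1 - q) * phi \<ge> 0"
    unfolding key using aq qN0 a0 q0 by (simp add: mult_nonneg_nonneg)
  have "(1 - q) * (1 - a) \<le> a * q" using qa by (simp add: algebra_simps)
  moreover have "(a * q - (1 - q)) * q ^ N \<le> 0" using aq qN0 by (simp add: mult_nonpos_nonneg)
  ultimately have up: "(1 - q) * phi \<le> (1 - q) * (a + q ^ N)"
    unfolding key by (simp add: algebra_simps)
  have phi0: "phi \<ge> 0" using lo q1 by (simp add: zero_le_mult_iff)
  have phi1: "phi \<le> a + q ^ N" using up q1 by simp
  have "a \<le> \<gamma> * lam" unfolding a_def using mult_right_mono[OF hle, of lam] l0 h_def by simp
  then have "phi \<le> \<gamma> * (1 + lam)" using phi1 qN tail by (simp add: algebra_simps)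
  then show ?thesis using phi0 sumeq unfolding phi_def by simp
qed




lemma path_sq:
  fixes g :: "'a \<Rightarrow> real"
  assumes "rtrancl_path r x xs y"
  shows "(g x)\<^sup>2 \<le> real (length xs + 1) * (sum_list (map (\<lambda>(a, c). (g a - g c)\<^sup>2) (zip (x # xs) xs)) + (g y)\<^sup>2)"
  using assms
proof (induction rule: rtrancl_path.induct)
  case (base x)
  then show ?case by simp
next
  case (step x y ys z)
  define n where "n = real (length ys + 1)"
  define R where "R = sum_list (map (\<lambda>(a, c). (g a - g c)\<^sup>2) (zip (y # ys) ys)) + (g z)\<^sup>2"
  define d where "d = g x - g y"
  define t where "t = g y"
  have n1: "n \<ge> 1" unfolding n_def by simp
  have IH: "t\<^sup>2 \<le> n * R" using step.IH unfolding n_def R_def t_def .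
  have "0 \<le> (n * d - t)\<^sup>2" by simp
  then have "n * (d + t)\<^sup>2 \<le> n * (n + 1) * d\<^sup>2 + (n + 1) * t\<^sup>2"
    by (simp add: power2_eq_square algebra_simps)
  also have "\<dots> \<le> n * (n + 1) * d\<^sup>2 + (n + 1) * (n * R)"
    using IH n1 by (intro add_left_mono mult_left_mono) auto
  finally have "n * (d + t)\<^sup>2 \<le> n * ((n + 1) * (d\<^sup>2 + R))" by (simp add: algebra_simps)
  then have "(d + t)\<^sup>2 \<le> (n + 1) * (d\<^sup>2 + R)" using n1 by simp
  moreover have "d + t = g x" unfolding d_def t_def by simp
  moreover have "sum_list (map (\<lambda>(a, c). (g a - g c)\<^sup>2) (zip (x # y # ys) (y # ys))) = d\<^sup>2 + (R - (g z)\<^sup>2)"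
    unfolding d_def R_def by simp
  ultimately show ?case unfolding n_def by (simp add: algebra_simps)
qed

lemma path_steps:
  assumes "rtrancl_path r x xs y"
  shows "\<forall>p \<in> set (zip (x # xs) xs). r (fst p) (snd p)"
  using assms by (induction rule: rtrancl_path.induct) auto

lemma path_set:
  assumes "rtrancl_path r x xs y" "\<And>a c. r a c \<Longrightarrow> c \<in> S"
  shows "set xs \<subseteq> S"
  using assms by (induction rule: rtrancl_path.induct) auto

lemma zip_no_reverse:
  assumes "distinct l"
  assumes "(a, c) \<in> set (zip l (tl l))" "(c, a) \<in> set (zip l (tl l))"
  shows False
proof -
  from assms(2) obtain i where i: "i < length l - 1" "a = l ! i" "c = l ! Suc i"
    by (auto simp: set_zip nth_tl)
  from assms(3) obtain j where j: "j < length l - 1" "c = l ! j" "a = l ! Suc j"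
    by (auto simp: set_zip nth_tl)
  have "i = Suc j" using i j assms(1) nth_eq_iff_index_eq by (metis Suc_lessD less_diff_conv add.commute plus_1_eq_Suc)
  moreover have "Suc i = j" using i j assms(1) nth_eq_iff_index_eq by (metis Suc_lessD less_diff_conv add.commute plus_1_eq_Suc)
  ultimately show False by simp
qed




lemma degree_split:
  assumes sg: "simple_graph V E" and SV: "S \<subseteq> V" and v: "v \<in> V"
  shows "degree V E v = (\<Sum>u\<in>S. adj E v u) + (\<Sum>u\<in>V - S. adj E v u)"
proof -
  have fin: "finite V" using sg unfolding simple_graph_def by simp
  have "degree V E v = (\<Sum>u\<in>{u \<in> V. E v u}. 1)" unfolding degree_def by simp
  also have "\<dots> = (\<Sum>u\<in>V. adj E v u)"
    unfolding sum.inter_filter[OF fin] adj_def by simp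
  also have "\<dots> = (\<Sum>u\<in>V - S. adj E v u) + (\<Sum>u\<in>S. adj E v u)"
    by (rule sum.subset_diff[OF SV fin])
  finally show ?thesis by simp
qed

lemma adj_nonneg: "adj E u v \<ge> 0" unfolding adj_def by simp

lemma adj_sym: "simple_graph V E \<Longrightarrow> adj E u v = adj E v u"
  unfolding adj_def simple_graph_def by auto

lemma int_le:
  assumes sg: "simple_graph V E" and fin: "finite S" and v: "v \<in> S"
  shows "(\<Sum>u\<in>S. adj E v u) \<le> real (card S) - 1"
proof -
  have "(\<Sum>u\<in>S. adj E v u) = (\<Sum>u\<in>S - {v}. adj E v u) + adj E v v"
    using sum.subset_diff[of "{v}" S "adj E v"] fin v by simp
  also have "adj E v v = 0" using sg unfolding adj_def simple_graph_def by simp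
  also have "(\<Sum>u\<in>S - {v}. adj E v u) \<le> (\<Sum>u\<in>S - {v}. 1)"
    by (rule sum_mono) (simp add: adj_def)
  also have "\<dots> = real (card S) - 1"
  proof -
    have "card S \<ge> 1" using fin v by (metis One_nat_def Suc_leI card_gt_0_iff empty_iff)
    then show ?thesis using fin v by (simp add: of_nat_diff)
  qed
  finally show ?thesis by simp
qed

lemma dir_core:
  fixes g :: "'a \<Rightarrow> real"
  assumes sg: "simple_graph V E" and SV: "S \<subseteq> V" and conn: "connected_on E S"
    and w: "w \<in> S" and u0: "u0 \<in> V" "u0 \<notin> S" "E w u0"
  shows "(\<Sum>v\<in>S. degree V E v * (g v)\<^sup>2)
     \<le> real (card S) ^ 3 * ((\<Sum>v\<in>S. degree V E v * (g v)\<^sup>2) - (\<Sum>v\<in>S. \<Sum>u\<in>S. adj E v u * g v * g u))"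
proof -
  have finV: "finite V" using sg unfolding simple_graph_def by simp
  have fin: "finite S" using finite_subset[OF SV finV] .
  define s where "s = real (card S)"
  have s1: "s \<ge> 1" unfolding s_def using fin w by (metis One_nat_def Suc_leI card_gt_0_iff empty_iff of_nat_1 of_nat_le_iff)
  define int where "int v = (\<Sum>u\<in>S. adj E v u)" for v
  define ext where "ext v = (\<Sum>u\<in>V - S. adj E v u)" for v
  have ext0: "ext v \<ge> 0" for v unfolding ext_def by (intro sum_nonneg adj_nonneg)
  define D where "D = (\<Sum>v\<in>S. degree V E v * (g v)\<^sup>2)"
  define B where "B = (\<Sum>v\<in>S. \<Sum>u\<in>S. adj E v u * g v * g u)"
  define J where "J = (\<Sum>v\<in>S. \<Sum>u\<in>S. adj E v u * (g v - g u)\<^sup>2)"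
  define X where "X = (\<Sum>v\<in>S. ext v * (g v)\<^sup>2)"
  have Dsplit: "D = (\<Sum>v\<in>S. int v * (g v)\<^sup>2) + X"
    unfolding D_def X_def int_def ext_def
    using degree_split[OF sg SV] SV by (simp add: sum.distrib[symmetric] distrib_right subset_iff)
  have J1: "(\<Sum>v\<in>S. \<Sum>u\<in>S. adj E v u * (g v)\<^sup>2) = (\<Sum>v\<in>S. int v * (g v)\<^sup>2)"
    unfolding int_def by (simp add: sum_distrib_right)
  have J2: "(\<Sum>v\<in>S. \<Sum>u\<in>S. adj E v u * (g u)\<^sup>2) = (\<Sum>v\<in>S. int v * (g v)\<^sup>2)"
  proof -
    have "(\<Sum>v\<in>S. \<Sum>u\<in>S. adj E v u * (g u)\<^sup>2) = (\<Sum>u\<in>S. \<Sum>v\<in>S. adj E v u * (g u)\<^sup>2)"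
      by (rule sum.swap)
    also have "\<dots> = (\<Sum>u\<in>S. \<Sum>v\<in>S. adj E u v * (g u)\<^sup>2)"
      using adj_sym[OF sg] by simp
    finally show ?thesis using J1 by simp
  qed
  have Jeq: "J = 2 * (\<Sum>v\<in>S. int v * (g v)\<^sup>2) - 2 * B"
  proof -
    have "J = (\<Sum>v\<in>S. \<Sum>u\<in>S. adj E v u * (g v)\<^sup>2 + adj E v u * (g u)\<^sup>2 - 2 * (adj E v u * g v * g u))"
      unfolding J_def by (intro sum.cong refl) (simp add: power2_eq_square algebra_simps)
    also have "\<dots> = (\<Sum>v\<in>S. \<Sum>u\<in>S. adj E v u * (g v)\<^sup>2) + (\<Sum>v\<in>S. \<Sum>u\<in>S. adj E v u * (g u)\<^sup>2) - 2 * B"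
      unfolding B_def by (simp add: sum.distrib sum_subtractf sum_distrib_left)
    finally show ?thesis using J1 J2 by simp
  qed
  have Q: "D - B = J / 2 + X" using Dsplit Jeq by simp
  obtain m where m: "m \<in> S" "\<And>v. v \<in> S \<Longrightarrow> (g v)\<^sup>2 \<le> (g m)\<^sup>2"
  proof -
    have ne: "(\<lambda>v. (g v)\<^sup>2) ` S \<noteq> {}" using w by auto
    have "Max ((\<lambda>v. (g v)\<^sup>2) ` S) \<in> (\<lambda>v. (g v)\<^sup>2) ` S" using Max_in[OF finite_imageI[OF fin] ne] .
    then obtain m where "m \<in> S" "(g m)\<^sup>2 = Max ((\<lambda>v. (g v)\<^sup>2) ` S)" by auto
    moreover have "\<And>v. v \<in> S \<Longrightarrow> (g v)\<^sup>2 \<le> Max ((\<lambda>v. (g v)\<^sup>2) ` S)"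
      using fin by (intro Max_ge) auto
    ultimately show ?thesis using that by metis
  qed
  define r where "r = (\<lambda>a c. a \<in> S \<and> c \<in> S \<and> E a c)"
  have "(m, w) \<in> {(a, c). a \<in> S \<and> c \<in> S \<and> E a c}\<^sup>*" using conn m(1) w unfolding connected_on_def by blast
  then have "r\<^sup>*\<^sup>* m w" unfolding r_def rtranclp_rtrancl_eq by simp
  then obtain xs0 where "rtrancl_path r m xs0 w" using rtranclp_eq_rtrancl_path by metis
  then obtain xs where xs: "rtrancl_path r m xs w" "distinct (m # xs)"
    using rtrancl_path_distinct by metis
  have setxs: "set (m # xs) \<subseteq> S" using path_set[OF xs(1), of S] m(1) unfolding r_def by auto
  have len: "real (length xs + 1) \<le> s"
  proof -
    have "length (m # xs) = card (set (m # xs))" using distinct_card[OF xs(2)] by simp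
    also have "\<dots> \<le> card S" by (rule card_mono[OF fin setxs])
    finally show ?thesis unfolding s_def by simp
  qed
  define P where "P = set (zip (m # xs) xs)"
  define h where "h = (\<lambda>p. (g (fst p) - g (snd p))\<^sup>2)"
  have finP: "finite P" unfolding P_def by simp
  have sl: "sum_list (map (\<lambda>(a, c). (g a - g c)\<^sup>2) (zip (m # xs) xs)) = sum h P"
  proof -
    have "(\<lambda>(a, c). (g a - g c)\<^sup>2) = h" unfolding h_def by auto
    then show ?thesis unfolding P_def
      using sum_list_distinct_conv_sum_set[OF distinct_zipI1[OF xs(2)], of h] by simp
  qed
  have pathb: "(g m)\<^sup>2 \<le> s * (sum h P + (g w)\<^sup>2)"
  proof -
    have "(g m)\<^sup>2 \<le> real (length xs + 1) * (sum h P + (g w)\<^sup>2)"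
      using path_sq[OF xs(1), of g] sl by simp
    also have "\<dots> \<le> s * (sum h P + (g w)\<^sup>2)"
      by (rule mult_right_mono[OF len]) (simp add: h_def sum_nonneg)
    finally show ?thesis .
  qed
  have Pr: "\<forall>p\<in>P. r (fst p) (snd p)" unfolding P_def using path_steps[OF xs(1)] .
  define P2 where "P2 = prod.swap ` P"
  have disj: "P \<inter> P2 = {}"
  proof (rule ccontr)
    assume "P \<inter> P2 \<noteq> {}"
    then obtain a c where "(a, c) \<in> P" "(c, a) \<in> P" unfolding P2_def by auto
    then show False using zip_no_reverse[OF xs(2), of a c] unfolding P_def by simp
  qed
  have hP2: "sum h P2 = sum h P"
    unfolding P2_def by (subst sum.reindex) (auto simp: h_def power2_commute)
  have sub: "P \<union> P2 \<subseteq> S \<times> S" and adj1: "\<And>p. p \<in> P \<union> P2 \<Longrightarrow> adj E (fst p) (snd p) = 1"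
    using Pr sg unfolding P2_def r_def adj_def simple_graph_def by auto
  have "2 * sum h P = sum h (P \<union> P2)"
    using sum.union_disjoint[OF finP _ disj, of h] hP2 finP unfolding P2_def by simp
  also have "\<dots> = (\<Sum>p\<in>P \<union> P2. adj E (fst p) (snd p) * h p)"
    using adj1 by simp
  also have "\<dots> \<le> (\<Sum>p\<in>S \<times> S. adj E (fst p) (snd p) * h p)"
    by (rule sum_mono2) (use fin sub in \<open>auto simp: h_def adj_nonneg\<close>)
  also have "\<dots> = J" unfolding J_def h_def by (simp add: sum.cartesian_product case_prod_beta)
  finally have hJ: "2 * sum h P \<le> J" .
  have extw: "ext w \<ge> 1"
  proof -
    have "adj E w u0 \<le> ext w" unfolding ext_def
      using finV u0 by (intro member_le_sum) (auto simp: adj_nonneg)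
    then show ?thesis using u0 by (simp add: adj_def)
  qed
  have Xw: "X \<ge> (g w)\<^sup>2"
  proof -
    have "ext w * (g w)\<^sup>2 \<le> X" unfolding X_def
      using fin w ext0 by (intro member_le_sum) auto
    moreover have "(g w)\<^sup>2 \<le> ext w * (g w)\<^sup>2" using extw mult_right_mono[OF extw, of "(g w)\<^sup>2"] by simp
    ultimately show ?thesis by simp
  qed
  have X0: "X \<ge> 0" using Xw by (meson order_trans zero_le_power2)
  have intb: "(\<Sum>v\<in>S. int v * (g v)\<^sup>2) \<le> s * (s - 1) * (g m)\<^sup>2"
  proof -
    have "(\<Sum>v\<in>S. int v * (g v)\<^sup>2) \<le> (\<Sum>v\<in>S. (s - 1) * (g m)\<^sup>2)"
    proof (rule sum_mono)
      fix v assume v: "v \<in> S"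
      have "int v \<ge> 0" unfolding int_def by (intro sum_nonneg adj_nonneg)
      moreover have "int v \<le> s - 1" unfolding int_def s_def using int_le[OF sg fin v] .
      ultimately show "int v * (g v)\<^sup>2 \<le> (s - 1) * (g m)\<^sup>2"
        using m(2)[OF v] by (intro mult_mono) auto
    qed
    also have "\<dots> = s * (s - 1) * (g m)\<^sup>2" unfolding s_def by simp
    finally show ?thesis .
  qed
  define M2 where "M2 = (g m)\<^sup>2"
  define W where "W = (g w)\<^sup>2"
  have W0: "W \<ge> 0" unfolding W_def by simp
  have WM: "W \<le> M2" unfolding W_def M2_def using m(2)[OF w] .
  have Dle: "D \<le> s * (s - 1) * M2 + X" using Dsplit intb unfolding M2_def by simp
  have pb: "M2 \<le> s * (J / 2 + W)"
  proof -
    have "s * (sum h P + (g w)\<^sup>2) \<le> s * (J / 2 + (g w)\<^sup>2)"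
      using hJ s1 by (intro mult_left_mono) auto
    then show ?thesis using pathb unfolding M2_def W_def by simp
  qed
  have "s * s * M2 \<le> s * s * (s * (J / 2 + W))" using pb s1 by (intro mult_left_mono) auto
  then have A1: "s * s * M2 - s^3 * W \<le> s^3 * (J / 2)" by (simp add: power3_eq_cube algebra_simps)
  have A2: "(s^3 - 1) * W \<le> (s^3 - 1) * X" using Xw s1 unfolding W_def
    by (intro mult_left_mono) (auto simp: one_le_power)
  have A3: "s * M2 \<ge> W"
  proof -
    have "1 * M2 \<le> s * M2" by (rule mult_right_mono[OF s1]) (simp add: M2_def)
    then show ?thesis using WM by simp
  qed
  have "D \<le> s ^ 3 * (J / 2 + X)"
  proof -
    have "s * (s - 1) * M2 + X = s * s * M2 - s * M2 + X" by (simp add: algebra_simps)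
    also have "\<dots> \<le> s^3 * (J / 2) + s^3 * W - s * M2 + X" using A1 by simp
    also have "\<dots> \<le> s^3 * (J / 2) + s^3 * W - W + X" using A3 by simp
    also have "\<dots> \<le> s^3 * (J / 2) + s^3 * X" using A2 by (simp add: algebra_simps)
    finally show ?thesis using Dle by (simp add: algebra_simps)
  qed
  then show ?thesis using Q unfolding D_def B_def s_def by simp
qed




lemma nlap_sym: "simple_graph V E \<Longrightarrow> nlap V E u v = nlap V E v u"
  unfolding nlap_def using adj_sym[of V E u v] by (auto simp: mult.commute)

lemma vnorm_L2: "vnorm S f = L2_set f S"
  unfolding vnorm_def L2_set_def ..

lemma vnorm_combo:
  assumes "orthn S e n" "\<And>v. v \<in> S \<Longrightarrow> f v = (\<Sum>i<n. a i * e i v)"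
  shows "vnorm S f = sqrt (\<Sum>i<n. (a i)\<^sup>2)"
proof -
  have "(\<Sum>v\<in>S. (f v)\<^sup>2) = ip S (\<lambda>v. \<Sum>i<n. a i * e i v) (\<lambda>v. \<Sum>i<n. a i * e i v)"
    unfolding ip_def using assms(2) by (intro sum.cong) (auto simp: power2_eq_square)
  also have "\<dots> = (\<Sum>i<n. (a i)\<^sup>2)" using orthn_combo[OF assms(1)] by (simp add: power2_eq_square)
  finally show ?thesis unfolding vnorm_def by simp
qed

lemma dirichlet:
  assumes sg: "simple_graph V E" and SV: "S \<subseteq> V" and conn: "connected_on E S"
    and w: "w \<in> S" and u0: "u0 \<in> V" "u0 \<notin> S" "E w u0"
    and dpos: "\<And>v. v \<in> S \<Longrightarrow> degree V E v > 0"
  shows "ip S f f \<le> real (card S) ^ 3 * qf S (nlap V E) f"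
proof -
  define g where "g v = f v / sqrt (degree V E v)" for v
  have fg: "f v = sqrt (degree V E v) * g v" if "v \<in> S" for v
    unfolding g_def using dpos[OF that] by simp
  have "ip S f f = (\<Sum>v\<in>S. degree V E v * (g v)\<^sup>2)"
    unfolding ip_def by (intro sum.cong refl) (simp add: fg dpos power2_eq_square less_imp_le)
  moreover have "qf S (nlap V E) f = (\<Sum>v\<in>S. degree V E v * (g v)\<^sup>2) - (\<Sum>v\<in>S. \<Sum>u\<in>S. adj E v u * g v * g u)"
  proof -
    have "qf S (nlap V E) f = (\<Sum>v\<in>S. \<Sum>u\<in>S. (if v = u then degree V E v else 0) * g v * g u - adj E v u * g v * g u)"
      unfolding qf_expand
    proof (intro sum.cong refl)
      fix v u assume v: "v \<in> S" and u: "u \<in> S"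
      have dv: "degree V E v > 0" and du: "degree V E u > 0" using dpos v u by auto
      have "f v * nlap V E v u * f u
          = (sqrt (degree V E v) * g v) * (((if v = u then degree V E v else 0) - adj E v u)
             / (sqrt (degree V E v) * sqrt (degree V E u))) * (sqrt (degree V E u) * g u)"
        unfolding nlap_def fg[OF v] fg[OF u] by (simp add: real_sqrt_mult)
      also have "\<dots> = ((if v = u then degree V E v else 0) - adj E v u) * g v * g u"
        using dv du by (simp add: field_simps)
      finally show "f v * nlap V E v u * f u = (if v = u then degree V E v else 0) * g v * g u - adj E v u * g v * g u"
        by (simp add: algebra_simps)
    qed
    also have "\<dots> = (\<Sum>v\<in>S. \<Sum>u\<in>S. (if v = u then degree V E v else 0) * g v * g u) - (\<Sum>v\<in>S. \<Sum>u\<in>S. adj E v u * g v * g u)"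
      by (simp add: sum_subtractf)
    also have "(\<Sum>v\<in>S. \<Sum>u\<in>S. (if v = u then degree V E v else 0) * g v * g u) = (\<Sum>v\<in>S. degree V E v * (g v)\<^sup>2)"
    proof (intro sum.cong refl)
      fix v assume v: "v \<in> S"
      have fin: "finite S" using sg SV finite_subset unfolding simple_graph_def by blast
      have "(\<Sum>u\<in>S. (if v = u then degree V E v else 0) * g v * g u) = (\<Sum>u\<in>S. if v = u then degree V E v * g v * g u else 0)"
        by (intro sum.cong refl) auto
      also have "\<dots> = degree V E v * g v * g v" using fin v by simp
      finally show "(\<Sum>u\<in>S. (if v = u then degree V E v else 0) * g v * g u) = degree V E v * (g v)\<^sup>2"
        by (simp add: power2_eq_square)
    qed
    finally show ?thesis .
  qed
  ultimately show ?thesis using dir_core[OF sg SV conn w u0, of g] by simp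
qed


theorem lemma2:
  fixes V :: "'a set" and E :: "'a \<Rightarrow> 'a \<Rightarrow> bool"
    and b x :: "'a \<Rightarrow> real" and S :: "'a set" and \<gamma> :: real
  assumes "simple_graph V E" and "connected_on E V"
    and "supp V b \<noteq> {}"
    and "boundable V E b S"
    and "is_local_solution V E S b x"
    and "0 < \<gamma>" and "\<gamma> < 1"
  shows "let s = real (card S);
             T = s ^ 3 * ln (s ^ 3 / \<gamma>);
             N = nat \<lceil>T / \<gamma>\<rceil>;
             b1 = bvec1 V E S b
         in vnorm S (\<lambda>v. x v - (\<Sum>j = 1..N. heat_apply V E S (real j * T / real N) (\<lambda>u. T / real N * b1 u) v))
            \<le> \<gamma> * (vnorm S b1 + vnorm S x)"
proof -
  define s where "s = real (card S)"
  define T where "T = s ^ 3 * ln (s ^ 3 / \<gamma>)"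
  define N where "N = nat \<lceil>T / \<gamma>\<rceil>"
  define b1 where "b1 = bvec1 V E S b"
  note sg = assms(1)
  have g0: "0 < \<gamma>" and g1: "\<gamma> < 1" using assms(6,7) .
  have finV: "finite V" using sg unfolding simple_graph_def by simp
  from assms(4) have Ssub: "S \<subseteq> V - supp V b" and connS: "connected_on E S" and bd: "vboundary V E S \<noteq> {}"
    unfolding boundable_def by auto
  have SV: "S \<subseteq> V" using Ssub by auto
  have fin: "finite S" using finite_subset[OF SV finV] .
  obtain u0 w where u0: "u0 \<in> V" "u0 \<notin> S" and w: "w \<in> S" "E u0 w"
    using bd unfolding vboundary_def by auto
  have Ewu: "E w u0" using w(2) sg unfolding simple_graph_def by blast
  have s1: "s \<ge> 1" unfolding s_def using fin w(1)
    by (metis One_nat_def Suc_leI card_gt_0_iff empty_iff of_nat_1 of_nat_le_iff)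
  have s3: "s ^ 3 \<ge> 1" using s1 by (simp add: one_le_power)
  have dpos: "degree V E v > 0" if v: "v \<in> S" for v
  proof -
    have "\<exists>y\<in>V. E v y"
    proof -
      have "(v, w) \<in> {(a, c). a \<in> S \<and> c \<in> S \<and> E a c}\<^sup>*"
        using connS v w(1) unfolding connected_on_def by blast
      then show ?thesis
      proof (cases rule: converse_rtranclE)
        case base then show ?thesis using Ewu u0 by blast
      next
        case (step y) then show ?thesis using SV by auto
      qed
    qed
    then have "{u \<in> V. E v u} \<noteq> {}" by blast
    then have "card {u \<in> V. E v u} > 0" using finV by (simp add: card_gt_0_iff)
    then show "degree V E v > 0" unfolding degree_def by simp
  qed
  have symM: "\<forall>u\<in>S. \<forall>v\<in>S. nlap V E u v = nlap V E v u" using nlap_sym[OF sg] by blast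
  obtain e l where orth: "orthn S e (card S)"
    and eig: "\<forall>i<card S. \<forall>v\<in>S. matvec S (nlap V E) (e i) v = l i * e i v"
    using spectral[OF fin symM] by blast
  have lpos: "s ^ 3 * l i \<ge> 1" if i: "i < card S" for i
  proof -
    have "qf S (nlap V E) (e i) = ip S (e i) (\<lambda>v. l i * e i v)"
      unfolding qf_def by (rule ip_cong) (use eig i in auto)
    also have "\<dots> = l i" using orth i by (simp add: ip_scale_right orthn_def)
    finally have q: "qf S (nlap V E) (e i) = l i" .
    have "ip S (e i) (e i) = 1" using orth i by (simp add: orthn_def)
    then show ?thesis using dirichlet[OF sg SV connS w(1) u0 Ewu dpos, of "e i"] q unfolding s_def by simp
  qed
  have l0: "l i > 0" if "i < card S" for i
  proof -
    have "s ^ 3 * l i > 0" using lpos[OF that] by linarith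
    then show ?thesis using s1 by (simp add: zero_less_mult_iff)
  qed
  have Kx: "matvec S (nlap V E) x v = b1 v" if v: "v \<in> S" for v
  proof -
    define d where "d = degree V E"
    have dv: "d v > 0" unfolding d_def using dpos[OF v] .
    have "matvec S (nlap V E) x v = (\<Sum>u\<in>S. (if v = u then d v else 0) * x u / sqrt (d v * d u))
            - (\<Sum>u\<in>S. adj E v u * x u / sqrt (d v * d u))"
      unfolding matvec_apply[OF v] nlap_def d_def[symmetric]
      by (simp add: sum_subtractf[symmetric] diff_divide_distrib left_diff_distrib)
    also have "(\<Sum>u\<in>S. (if v = u then d v else 0) * x u / sqrt (d v * d u)) = d v * x v / sqrt (d v * d v)"
    proof -
      have "(\<Sum>u\<in>S. (if v = u then d v else 0) * x u / sqrt (d v * d u)) = (\<Sum>u\<in>S. if v = u then d v * x u / sqrt (d v * d u) else 0)"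
        by (intro sum.cong refl) auto
      also have "\<dots> = d v * x v / sqrt (d v * d v)" using fin v by simp
      finally show ?thesis .
    qed
    also have "d v * x v / sqrt (d v * d v) = x v" using dv by simp
    also have "x v = (\<Sum>u\<in>V. adj E v u * x u / sqrt (d v * d u))"
    proof -
      have "x v = (\<Sum>u\<in>{u \<in> V. E v u}. x u / sqrt (d v * d u))"
        using assms(5) v unfolding is_local_solution_def d_def by blast
      also have "\<dots> = (\<Sum>u\<in>V. adj E v u * x u / sqrt (d v * d u))"
        unfolding sum.inter_filter[OF finV] adj_def by (intro sum.cong refl) auto
      finally show ?thesis .
    qed
    also have "(\<Sum>u\<in>V. adj E v u * x u / sqrt (d v * d u))
        = (\<Sum>u\<in>V - S. adj E v u * x u / sqrt (d v * d u)) + (\<Sum>u\<in>S. adj E v u * x u / sqrt (d v * d u))"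
      by (rule sum.subset_diff[OF SV finV])
    also have "(\<Sum>u\<in>V - S. adj E v u * x u / sqrt (d v * d u)) = (\<Sum>u\<in>V - S. adj E v u * b u / sqrt (d v * d u))"
      using assms(5) unfolding is_local_solution_def by (intro sum.cong refl) auto
    also have "\<dots> = (\<Sum>u\<in>vboundary V E S. adj E v u * b u / sqrt (d v * d u))"
    proof (rule sum.mono_neutral_right)
      show "finite (V - S)" using finV by simp
      show "vboundary V E S \<subseteq> V - S" unfolding vboundary_def by auto
      show "\<forall>u\<in>V - S - vboundary V E S. adj E v u * b u / sqrt (d v * d u) = 0"
      proof
        fix u assume u: "u \<in> V - S - vboundary V E S"
        have "\<not> E v u"
        proof
          assume "E v u"
          then have "E u v" using sg unfolding simple_graph_def by blast
          then have "u \<in> vboundary V E S" using u v unfolding vboundary_def by auto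
          then show False using u by blast
        qed
        then show "adj E v u * b u / sqrt (d v * d u) = 0" unfolding adj_def by simp
      qed
    qed
    also have "\<dots> = b1 v" unfolding b1_def bvec1_def d_def using v by simp
    finally show ?thesis by simp
  qed
  have lnpos: "ln (s ^ 3 / \<gamma>) > 0"
  proof -
    have "s ^ 3 / \<gamma> > 1" using s3 g0 g1 by (simp add: less_divide_eq)
    then show ?thesis by simp
  qed
  have T0: "T > 0" unfolding T_def using lnpos s1 by (intro mult_pos_pos) auto
  have Tg: "T / \<gamma> > 0" using T0 g0 by simp
  have N1: "N \<ge> 1" unfolding N_def using Tg by (simp add: le_nat_iff)
  have NT: "real N \<ge> T / \<gamma>"
  proof -
    have "\<lceil>T / \<gamma>\<rceil> \<ge> 0" using Tg by simp
    then have "real N = real_of_int \<lceil>T / \<gamma>\<rceil>" unfolding N_def by simp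
    then show ?thesis using le_of_int_ceiling[of "T / \<gamma>"] by simp
  qed
  have hle: "T / real N \<le> \<gamma>"
  proof -
    have Npos: "real N > 0" using NT Tg by linarith
    have "T / real N \<le> T / (T / \<gamma>)"
      by (rule divide_left_mono[OF NT]) (use T0 mult_pos_pos[OF Npos Tg] in auto)
    also have "\<dots> = \<gamma>" using T0 g0 by simp
    finally show ?thesis .
  qed
  have tail: "exp (- T * l i) \<le> \<gamma>" if i: "i < card S" for i
  proof -
    have "T * l i \<ge> ln (s ^ 3 / \<gamma>)"
    proof -
      have "T * l i = ln (s ^ 3 / \<gamma>) * (s ^ 3 * l i)" unfolding T_def by simp
      also have "\<dots> \<ge> ln (s ^ 3 / \<gamma>) * 1" using lpos[OF i] lnpos by (intro mult_left_mono) auto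
      finally show ?thesis by simp
    qed
    moreover have "ln (s ^ 3 / \<gamma>) \<ge> ln (1 / \<gamma>)"
    proof -
      have p: "s ^ 3 / \<gamma> > 0" using s1 g0 by simp
      have "1 / \<gamma> \<le> s ^ 3 / \<gamma>" using s3 g0 by (simp add: divide_right_mono)
      then show ?thesis using p g0 by (subst ln_le_cancel_iff) auto
    qed
    moreover have "ln (1 / \<gamma>) = - ln \<gamma>" using g0 by (simp add: ln_div)
    ultimately have "- T * l i \<le> ln \<gamma>" by simp
    then have "exp (- T * l i) \<le> exp (ln \<gamma>)" by simp
    then show ?thesis using g0 by simp
  qed
  define phi where "phi i = 1 - (\<Sum>j = 1..N. T / real N * l i * exp (- (real j * T / real N) * l i))" for i
  have phib: "\<bar>phi i\<bar> \<le> \<gamma> * (1 + l i)" if i: "i < card S" for i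
    unfolding phi_def by (rule scalar_bound[OF g0 T0 N1 hle l0[OF i] tail[OF i]])
  define c where "c i = ip S x (e i)" for i
  have ipb: "ip S (\<lambda>u. T / real N * b1 u) (e i) = T / real N * (l i * c i)" if i: "i < card S" for i
  proof -
    have "ip S b1 (e i) = ip S (matvec S (nlap V E) x) (e i)" by (rule ip_cong) (use Kx in auto)
    also have "\<dots> = ip S x (matvec S (nlap V E) (e i))" using ip_matvec_sym[OF symM] by simp
    also have "\<dots> = ip S x (\<lambda>v. l i * e i v)" by (rule ip_cong) (use eig i in auto)
    also have "\<dots> = l i * c i" unfolding c_def by (simp add: ip_scale_right)
    finally show ?thesis by (subst ip_scale_left) simp
  qed
  have err: "x v - (\<Sum>j = 1..N. heat_apply V E S (real j * T / real N) (\<lambda>u. T / real N * b1 u) v)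
             = (\<Sum>i<card S. (c i * phi i) * e i v)" if v: "v \<in> S" for v
  proof -
    have "(\<Sum>j = 1..N. heat_apply V E S (real j * T / real N) (\<lambda>u. T / real N * b1 u) v)
        = (\<Sum>j = 1..N. \<Sum>i<card S. T / real N * (l i * c i) * exp (- (real j * T / real N) * l i) * e i v)"
      using heat_eig[OF fin orth eig v] ipb by (intro sum.cong refl) simp
    also have "\<dots> = (\<Sum>i<card S. c i * e i v * (\<Sum>j = 1..N. T / real N * l i * exp (- (real j * T / real N) * l i)))"
      by (subst sum.swap) (simp add: sum_distrib_left mult_ac)
    finally have H: "(\<Sum>j = 1..N. heat_apply V E S (real j * T / real N) (\<lambda>u. T / real N * b1 u) v)
        = (\<Sum>i<card S. c i * e i v * (\<Sum>j = 1..N. T / real N * l i * exp (- (real j * T / real N) * l i)))" .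
    have X: "x v = (\<Sum>i<card S. c i * e i v)" unfolding c_def using orthn_complete[OF orth fin v] .
    show ?thesis unfolding H X phi_def
      by (simp add: sum_subtractf[symmetric] algebra_simps)
  qed
  have xb: "x v + b1 v = (\<Sum>i<card S. (c i * (1 + l i)) * e i v)" if v: "v \<in> S" for v
  proof -
    have "b1 v = ((matvec S (nlap V E)) ^^ 1) x v" using Kx[OF v] by simp
    also have "\<dots> = (\<Sum>i<card S. c i * l i * e i v)"
      unfolding c_def using powers_eig[OF fin orth eig v, of 1 x] by simp
    finally show ?thesis using orthn_complete[OF orth fin v, of x] unfolding c_def
      by (simp add: sum.distrib[symmetric] algebra_simps)
  qed
  have n1: "vnorm S (\<lambda>v. x v - (\<Sum>j = 1..N. heat_apply V E S (real j * T / real N) (\<lambda>u. T / real N * b1 u) v))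
      = sqrt (\<Sum>i<card S. (c i * phi i)\<^sup>2)"
    by (rule vnorm_combo[OF orth err])
  have n2: "vnorm S (\<lambda>v. x v + b1 v) = sqrt (\<Sum>i<card S. (c i * (1 + l i))\<^sup>2)"
    by (rule vnorm_combo[OF orth xb])
  have n3: "vnorm S (\<lambda>v. x v + b1 v) \<le> vnorm S b1 + vnorm S x"
    unfolding vnorm_L2 using L2_set_triangle_ineq[of x b1 S] by simp
  have "sqrt (\<Sum>i<card S. (c i * phi i)\<^sup>2) \<le> sqrt (\<Sum>i<card S. \<gamma>\<^sup>2 * (c i * (1 + l i))\<^sup>2)"
  proof (intro real_sqrt_le_mono sum_mono)
    fix i assume "i \<in> {..<card S}"
    then have i: "i < card S" by simp
    have "\<bar>phi i\<bar>\<^sup>2 \<le> (\<gamma> * (1 + l i))\<^sup>2" by (rule power_mono[OF phib[OF i]]) simp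
    then have "(phi i)\<^sup>2 \<le> (\<gamma> * (1 + l i))\<^sup>2" by simp
    then have "(c i)\<^sup>2 * (phi i)\<^sup>2 \<le> (c i)\<^sup>2 * (\<gamma> * (1 + l i))\<^sup>2" by (intro mult_left_mono) auto
    then show "(c i * phi i)\<^sup>2 \<le> \<gamma>\<^sup>2 * (c i * (1 + l i))\<^sup>2" by (simp add: power_mult_distrib mult_ac)
  qed
  also have "\<dots> = \<gamma> * sqrt (\<Sum>i<card S. (c i * (1 + l i))\<^sup>2)"
    using g0 by (simp add: sum_distrib_left[symmetric] real_sqrt_mult)
  also have "\<dots> \<le> \<gamma> * (vnorm S b1 + vnorm S x)" using n2 n3 g0 by (intro mult_left_mono) auto
  finally have main: "vnorm S (\<lambda>v. x v - (\<Sum>j = 1..N. heat_apply V E S (real j * T / real N) (\<lambda>u. T / real N * b1 u) v))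
      \<le> \<gamma> * (vnorm S b1 + vnorm S x)" unfolding n1 .
  show ?thesis unfolding Let_def s_def[symmetric] T_def[symmetric] N_def[symmetric] b1_def[symmetric]
    using main .
qed


end
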